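(* For every convex set $\mathcal{H}\subseteq\Delta_n$ and every $\varepsilon>0$, there is a strategy for the player that wins the $(\mathcal{H},\varepsilon)$-cutting-with-margin game in $O(\log(n)/\varepsilon^2)$ rounds.
   Context: $\Delta_n=\{h\in\mathbb{R}^n:\sum_i h_i=1,\ h_i\ge0\}$ and $B_1(h,r)=\{v\in\mathbb{R}^n:\|v-h\|_1\le r\}$. The $(\mathcal{H},\varepsilon)$-cutting-with-margin game is played between a player and an adversary who both know $\mathcal{H}$ and $\varepsilon$: start with $\mathcal{H}_0=\mathcal{H}$, $k=0$. While $\mathcal{H}_k\ne\emptyset$: the player picks a point $h_k\in\mathcal{H}_k$ (possibly depending on the history); the adversary picks any convex set $\mathcal{H}_{k+1}\subseteq\mathcal{H}_k$ with $\mathcal{H}_{k+1}\cap B_1(h_k,\varepsilon)=\emptyset$; increment $k$. A player strategy wins in at most $r$ rounds if for every sequence $\mathcal{H}=\mathcal{H}_0\supseteq\mathcal{H}_1\supseteq\cdots\supseteq\mathcal{H}_t$ of legal adversary moves against it, $\mathcal{H}_t\ne\emptyset$ implies $t<r$. *)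

theory Defs
  imports "HOL-Analysis.Analysis"
begin

text \<open>Points of R^n are represented as functions nat => real; only coordinates 0..n-1
  matter. Points of the prob_simplex are required to vanish outside {..<n}.\<close>

definition prob_simplex :: "nat \<Rightarrow> (nat \<Rightarrow> real) set" where
  "prob_simplex n = {h. (\<forall>i<n. 0 \<le> h i) \<and> (\<Sum>i<n. h i) = 1 \<and> (\<forall>i\<ge>n. h i = 0)}"

definition l1_ball :: "nat \<Rightarrow> (nat \<Rightarrow> real) \<Rightarrow> real \<Rightarrow> (nat \<Rightarrow> real) set" where
  "l1_ball n h r = {v. (\<forall>i\<ge>n. v i = 0) \<and> (\<Sum>i<n. \<bar>v i - h i\<bar>) \<le> r}"

definition convex_fun_set :: "(nat \<Rightarrow> real) set \<Rightarrow> bool" where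
  "convex_fun_set S \<longleftrightarrow>
     (\<forall>x\<in>S. \<forall>y\<in>S. \<forall>u::real. 0 \<le> u \<and> u \<le> 1 \<longrightarrow> (\<lambda>i. u * x i + (1 - u) * y i) \<in> S)"

text \<open>A player strategy maps the history of sets H_0,...,H_k (a nonempty list) to the
  next point h_k.\<close>

type_synonym strategy = "(nat \<Rightarrow> real) set list \<Rightarrow> (nat \<Rightarrow> real)"

definition legal_play ::
  "nat \<Rightarrow> (nat \<Rightarrow> real) set \<Rightarrow> real \<Rightarrow> strategy \<Rightarrow> (nat \<Rightarrow> real) set list \<Rightarrow> bool" where
  "legal_play n H eps \<sigma> Hs \<longleftrightarrow> Hs \<noteq> [] \<and> Hs ! 0 = H \<and>
     (\<forall>k. Suc k < length Hs \<longrightarrow>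
        Hs ! k \<noteq> {} \<and> convex_fun_set (Hs ! Suc k) \<and> Hs ! Suc k \<subseteq> Hs ! k \<and>
        Hs ! Suc k \<inter> l1_ball n (\<sigma> (take (Suc k) Hs)) eps = {})"

definition wins_within ::
  "nat \<Rightarrow> (nat \<Rightarrow> real) set \<Rightarrow> real \<Rightarrow> strategy \<Rightarrow> real \<Rightarrow> bool" where
  "wins_within n H eps \<sigma> r \<longleftrightarrow>
     (\<forall>Hs. legal_play n H eps \<sigma> Hs \<and> last Hs \<noteq> {} \<longrightarrow>
        \<sigma> Hs \<in> last Hs \<and> real (length Hs - 1) < r)"

end

theory Submission
  imports Defs
begin

lemma H_ineq:
  fixes t :: real assumes "0 \<le> t" "t < 1"
  shows "2 * t \<le> ln (1 + t) - ln (1 - t)"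
proof -
  let ?f = "\<lambda>t::real. ln (1 + t) - ln (1 - t) - 2 * t"
  have "?f 0 \<le> ?f t"
  proof (rule DERIV_nonneg_imp_nondecreasing[OF assms(1)])
    fix x :: real assume x: "0 \<le> x" "x \<le> t"
    then have x1: "x < 1" using assms by linarith
    have "x * x \<le> x * 1" using x x1 by (intro mult_left_mono) auto
    then have nz: "1 - x \<noteq> 0" "1 + x \<noteq> 0" "1 - x*x \<noteq> 0" "0 < 1 - x" "0 < 1 + x"
      using x x1 by auto
    have "DERIV ?f x :> 1 / (1 + x) + 1 / (1 - x) - 2"
      using x x1 nz by (auto intro!: derivative_eq_intros simp: field_simps)
    moreover have "1 / (1 + x) + 1 / (1 - x) - 2 \<ge> 0"
    proof -
      have "1 / (1 + x) + 1 / (1 - x) - 2 = 2 * x^2 / ((1+x)*(1-x))"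
        using nz by (simp add: field_simps power2_eq_square)
      also have "\<dots> \<ge> 0" using x x1 by simp
      finally show ?thesis .
    qed
    ultimately show "\<exists>y. DERIV ?f x :> y \<and> y \<ge> 0" by blast
  qed
  then show ?thesis by simp
qed

lemma G_ineq:
  fixes t :: real assumes "0 \<le> t" "t < 1"
  shows "t^2 \<le> (1 + t) * ln (1 + t) + (1 - t) * ln (1 - t)"
proof -
  let ?f = "\<lambda>t::real. (1 + t) * ln (1 + t) + (1 - t) * ln (1 - t) - t^2"
  have "?f 0 \<le> ?f t"
  proof (rule DERIV_nonneg_imp_nondecreasing[OF assms(1)])
    fix x :: real assume x: "0 \<le> x" "x \<le> t"
    then have x1: "x < 1" using assms by linarith
    have "x * x \<le> x * 1" using x x1 by (intro mult_left_mono) auto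
    then have nz: "1 - x \<noteq> 0" "1 + x \<noteq> 0" "1 - x*x \<noteq> 0" "0 < 1 - x" "0 < 1 + x"
      using x x1 by auto
    have "DERIV ?f x :> ln (1 + x) - ln (1 - x) - 2 * x"
      by (rule derivative_eq_intros refl | use nz in simp)+
    moreover have "ln (1 + x) - ln (1 - x) - 2 * x \<ge> 0" using H_ineq[OF x(1) x1] by simp
    ultimately show "\<exists>y. DERIV ?f x :> y \<and> y \<ge> 0" by blast
  qed
  then show ?thesis by simp
qed

lemma ln2_ge: "1/2 \<le> ln (2::real)"
proof -
  have "ln (1/2::real) \<le> 1/2 - 1" by (rule ln_le_minus_one) simp
  then show ?thesis by (simp add: ln_div)
qed

lemma D_ineq:
  fixes a b :: real assumes "0 \<le> b" "b \<le> a" "0 < a"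
  shows "(a - b)^2 / (2 * (a + b)) \<le> a * ln a + b * ln b - (a + b) * ln ((a + b) / 2)"
proof (cases "b = 0")
  case True
  have "a * ln a - a * ln (a / 2) = a * ln 2" using assms by (simp add: ln_div algebra_simps)
  moreover have "a * (1/2) \<le> a * ln 2" using ln2_ge assms by (intro mult_left_mono) auto
  ultimately show ?thesis using True assms by (simp add: power2_eq_square)
next
  case False
  then have b: "0 < b" using assms by simp
  define m where "m = (a + b) / 2"
  define t where "t = (a - b) / (a + b)"
  have m: "m > 0" using assms m_def by simp
  have t: "0 \<le> t" "t < 1" using assms b unfolding t_def by (auto simp: field_simps)
  have ea: "a = m * (1 + t)" and eb: "b = m * (1 - t)" using assms b unfolding m_def t_def
    by (auto simp: field_simps)
  have la: "ln a = ln m + ln (1 + t)" using ea m t by (simp add: ln_mult)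
  have lb: "ln b = ln m + ln (1 - t)" using eb m t by (simp add: ln_mult)
  have s: "(a + b) / 2 = m" "a + b = 2 * m" by (simp_all add: m_def)
  have "a * ln a + b * ln b - (a + b) * ln ((a + b) / 2)
      = a * (ln m + ln (1 + t)) + b * (ln m + ln (1 - t)) - 2 * m * ln m"
    unfolding la lb s(1) unfolding s(2) by simp
  also have "\<dots> = m * ((1 + t) * ln (1 + t) + (1 - t) * ln (1 - t))"
    unfolding ea eb by (simp add: algebra_simps)
  moreover have "(a - b)^2 / (2 * (a + b)) = m * t^2"
    unfolding ea eb using m by (simp add: field_simps power2_eq_square)
  moreover have "m * t^2 \<le> m * ((1 + t) * ln (1 + t) + (1 - t) * ln (1 - t))"
    using G_ineq[OF t] m by (intro mult_left_mono) auto
  ultimately show ?thesis by simp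
qed

lemma D_ineq2:
  fixes a b :: real assumes "0 \<le> a" "0 \<le> b"
  shows "(a - b)^2 / (a + b) \<le> 2 * (a * ln a + b * ln b - (a + b) * ln ((a + b) / 2))"
proof -
  consider "a = 0" "b = 0" | "0 \<le> b" "b \<le> a" "0 < a" | "0 \<le> a" "a \<le> b" "0 < b" using assms by linarith
  then show ?thesis
  proof cases
    case 2 from D_ineq[OF 2] show ?thesis using assms 2 by (simp add: field_simps)
  next
    case 3 from D_ineq[OF 3] show ?thesis using assms 3 by (simp add: field_simps power2_commute algebra_simps)
  qed simp
qed


definition Phi :: "nat \<Rightarrow> (nat \<Rightarrow> real) \<Rightarrow> real" where
  "Phi n h = (\<Sum>i<n. h i * ln (h i))"

lemma simplex_nonneg: "h \<in> prob_simplex n \<Longrightarrow> i < n \<Longrightarrow> 0 \<le> h i"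
  by (simp add: prob_simplex_def)

lemma simplex_le1: assumes "h \<in> prob_simplex n" "i < n" shows "h i \<le> 1"
proof -
  have "h i \<le> (\<Sum>j<n. h j)"
    using assms by (intro member_le_sum) (auto simp: prob_simplex_def)
  then show ?thesis using assms by (simp add: prob_simplex_def)
qed

lemma Phi_le0: assumes "h \<in> prob_simplex n" shows "Phi n h \<le> 0"
  unfolding Phi_def
proof (rule sum_nonpos)
  fix i assume "i \<in> {..<n}"
  then have "0 \<le> h i" "h i \<le> 1" using assms simplex_nonneg simplex_le1 by auto
  then show "h i * ln (h i) \<le> 0"
    by (cases "h i = 0") (auto intro: mult_nonneg_nonpos)
qed

lemma Phi_ge: assumes "h \<in> prob_simplex n" "n \<ge> 1" shows "- ln (real n) \<le> Phi n h"
proof -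
  have key: "- h i * ln n - h i * ln (h i) \<le> 1 / n - h i" if i: "i < n" for i
  proof (cases "h i = 0")
    case True then show ?thesis by simp
  next
    case False
    then have hp: "h i > 0" using simplex_nonneg[OF assms(1) i] by simp
    have np: "real n > 0" using assms by simp
    have "ln (1 / (n * h i)) \<le> 1 / (n * h i) - 1" using hp np by (intro ln_le_minus_one) simp
    then have "- ln n - ln (h i) \<le> 1 / (n * h i) - 1" using hp np by (simp add: ln_div ln_mult)
    then have "h i * (- ln n - ln (h i)) \<le> h i * (1 / (n * h i) - 1)" using hp by (intro mult_left_mono) auto
    then show ?thesis using hp np by (simp add: algebra_simps)
  qed
  have "(\<Sum>i<n. - h i * ln n - h i * ln (h i)) \<le> (\<Sum>i<n. 1 / n - h i)"
    using key by (intro sum_mono) auto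
  moreover have "(\<Sum>i<n. - h i * ln n - h i * ln (h i)) = - (\<Sum>i<n. h i) * ln n - Phi n h"
    unfolding Phi_def by (simp add: sum_subtractf sum_negf sum_distrib_right)
  moreover have "(\<Sum>i<n. 1 / real n - h i) = 1 - (\<Sum>i<n. h i)"
    using assms by (simp add: sum_subtractf)
  ultimately show ?thesis using assms(1) by (simp add: prob_simplex_def)
qed

lemma JS_ineq:
  assumes x: "x \<in> prob_simplex n" and y: "y \<in> prob_simplex n"
  shows "(\<Sum>i<n. \<bar>x i - y i\<bar>)^2 \<le> 4 * (Phi n x + Phi n y - 2 * Phi n (\<lambda>i. 1/2 * x i + (1 - 1/2) * y i))"
proof -
  define f where "f i = \<bar>x i - y i\<bar> / sqrt (x i + y i)" for i
  define g where "g i = sqrt (x i + y i)" for i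
  have nn: "0 \<le> x i" "0 \<le> y i" if "i < n" for i using that x y simplex_nonneg by auto
  have fg: "f i * g i = \<bar>x i - y i\<bar>" if "i < n" for i
  proof (cases "x i + y i = 0")
    case True then have "x i = 0" "y i = 0" using nn[OF that] by auto
    then show ?thesis by (simp add: f_def g_def)
  next
    case False then have "x i + y i > 0" using nn[OF that] by auto
    then show ?thesis by (simp add: f_def g_def)
  qed
  have f2: "(f i)^2 = (x i - y i)^2 / (x i + y i)" if "i < n" for i
    using nn[OF that] by (simp add: f_def power_divide)
  have g2: "(g i)^2 = x i + y i" if "i < n" for i
    using nn[OF that] by (simp add: g_def)
  have "(\<Sum>i<n. \<bar>x i - y i\<bar>)^2 = (\<Sum>i<n. f i * g i)^2" using fg by simp
  also have "\<dots> \<le> (\<Sum>i<n. (f i)^2) * (\<Sum>i<n. (g i)^2)" by (rule Cauchy_Schwarz_ineq_sum)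
  also have "(\<Sum>i<n. (g i)^2) = 2"
    using g2 x y by (simp add: sum.distrib prob_simplex_def)
  also have "(\<Sum>i<n. (f i)^2) \<le> (\<Sum>i<n. 2 * (x i * ln (x i) + y i * ln (y i) - (x i + y i) * ln ((x i + y i) / 2)))"
    using f2 nn D_ineq2 by (intro sum_mono) auto
  also have "(\<Sum>i<n. 2 * (x i * ln (x i) + y i * ln (y i) - (x i + y i) * ln ((x i + y i) / 2)))
     = 2 * (Phi n x + Phi n y - 2 * Phi n (\<lambda>i. 1/2 * x i + (1 - 1/2) * y i))"
  proof -
    have "(x i + y i) * ln ((x i + y i) / 2) = 2 * ((1/2 * x i + (1 - 1/2) * y i) * ln (1/2 * x i + (1 - 1/2) * y i))" for i
      by (simp add: field_simps)
    then show ?thesis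
      unfolding Phi_def by (simp add: sum_distrib_left sum.distrib sum_subtractf algebra_simps)
  qed
  finally show ?thesis by simp
qed

lemma last_take_Suc: "k < length xs \<Longrightarrow> last (take (Suc k) xs) = xs ! k"
  by (simp add: take_Suc_conv_app_nth)

lemma main_lemma:
  assumes n: "n \<ge> 1" and Hs_sub: "H \<subseteq> prob_simplex n" and Hconv: "convex_fun_set H" and eps: "eps > 0"
  defines "\<sigma> \<equiv> \<lambda>Hs. SOME h. h \<in> last Hs \<and> Phi n h \<le> Inf (Phi n ` last Hs) + eps\<^sup>2 / 8"
  shows "wins_within n H eps \<sigma> (9 * (1 + ln (real n) / eps\<^sup>2))"
proof -
  define \<delta> where "\<delta> = eps\<^sup>2 / 8"
  have \<delta>: "\<delta> > 0" using eps by (simp add: \<delta>_def)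
  have bdd: "bdd_below (Phi n ` S)" if "S \<subseteq> prob_simplex n" for S
    using that Phi_ge[OF _ n] by (intro bdd_belowI[of _ "- ln (real n)"]) auto
  have pick: "\<exists>h. h \<in> S \<and> Phi n h \<le> Inf (Phi n ` S) + eps\<^sup>2 / 8"
    if SS: "S \<subseteq> prob_simplex n" "S \<noteq> {}" for S
  proof -
    have lt: "Inf (Phi n ` S) < Inf (Phi n ` S) + eps\<^sup>2 / 8" using eps by simp
    have iff: "(Inf (Phi n ` S) < y) = (\<exists>x\<in>S. Phi n x < y)" for y
      using cInf_less_iff[of "Phi n ` S"] bdd[OF SS(1)] SS(2) by auto
    have "\<exists>x\<in>S. Phi n x < Inf (Phi n ` S) + eps\<^sup>2 / 8"
      using iff lt by blast
    then show ?thesis by (auto intro: less_imp_le)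
  qed
  have sig: "\<sigma> Hs \<in> last Hs \<and> Phi n (\<sigma> Hs) \<le> Inf (Phi n ` last Hs) + \<delta>"
    if "last Hs \<subseteq> prob_simplex n" "last Hs \<noteq> {}" for Hs
    unfolding \<sigma>_def \<delta>_def by (rule someI_ex[OF pick[OF that]])
  show ?thesis unfolding wins_within_def
  proof (intro allI impI)
    fix Hs assume A: "legal_play n H eps \<sigma> Hs \<and> last Hs \<noteq> {}"
    then have L: "Hs \<noteq> []" "Hs ! 0 = H"
      and step: "\<And>k. Suc k < length Hs \<Longrightarrow> Hs ! k \<noteq> {} \<and> convex_fun_set (Hs ! Suc k) \<and> Hs ! Suc k \<subseteq> Hs ! k \<and>
        Hs ! Suc k \<inter> l1_ball n (\<sigma> (take (Suc k) Hs)) eps = {}"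
      and lne: "last Hs \<noteq> {}"
      unfolding legal_play_def by blast+
    have sub: "k < length Hs \<longrightarrow> Hs ! k \<subseteq> H" for k
    proof (induction k)
      case 0 then show ?case using L by simp
    next
      case (Suc k) then show ?case using step[of k] by auto
    qed
    have subS: "Hs ! k \<subseteq> prob_simplex n" if "k < length Hs" for k
      using sub[of k] that Hs_sub by auto
    have conv: "convex_fun_set (Hs ! k)" if "k < length Hs" for k
    proof (cases k)
      case 0 then show ?thesis using L Hconv by simp
    next
      case (Suc j) then show ?thesis using step[of j] that by auto
    qed
    have pot: "k < length Hs \<longrightarrow> (\<forall>h\<in>Hs ! k. - ln (real n) + real k * \<delta> \<le> Phi n h)" for k
    proof (induction k)
      case 0 then show ?case using subS Phi_ge[OF _ n] by auto
    next
      case (Suc k)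
      show ?case
      proof (intro impI ballI)
        fix h assume k: "Suc k < length Hs" and h: "h \<in> Hs ! Suc k"
        define S where "S = Hs ! k"
        have k': "k < length Hs" using k by simp
        have Sne: "S \<noteq> {}" and Ssub: "S \<subseteq> prob_simplex n" and convS: "convex_fun_set S"
          using step[OF k] subS[OF k'] conv[OF k'] S_def by auto
        have hS: "h \<in> S" using step[OF k] h S_def by auto
        define p where "p = \<sigma> (take (Suc k) Hs)"
        have lt: "last (take (Suc k) Hs) = S" using k' S_def by (simp add: last_take_Suc)
        have p: "p \<in> S" "Phi n p \<le> Inf (Phi n ` S) + \<delta>"
          using sig[of "take (Suc k) Hs"] lt Ssub Sne p_def by auto
        have IH: "- ln (real n) + real k * \<delta> \<le> Inf (Phi n ` S)"
          using Suc.IH k' Sne unfolding S_def by (intro cInf_greatest) auto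
        have hsimp: "h \<in> prob_simplex n" "p \<in> prob_simplex n" using hS p Ssub by auto
        have "h \<notin> l1_ball n p eps" using step[OF k] h p_def by auto
        then have far: "eps < (\<Sum>i<n. \<bar>h i - p i\<bar>)"
          using hsimp by (auto simp: l1_ball_def prob_simplex_def)
        have "eps\<^sup>2 \<le> (\<Sum>i<n. \<bar>h i - p i\<bar>)\<^sup>2" using far eps by (intro power_mono) auto
        also have "\<dots> \<le> 4 * (Phi n h + Phi n p - 2 * Phi n (\<lambda>i. 1/2 * h i + (1 - 1/2) * p i))"
          by (rule JS_ineq[OF hsimp])
        finally have js: "eps\<^sup>2 \<le> 4 * (Phi n h + Phi n p - 2 * Phi n (\<lambda>i. 1/2 * h i + (1 - 1/2) * p i))" .
        have half_ok: "(0::real) \<le> 1/2 \<and> (1/2::real) \<le> 1" by simp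
        have "(\<lambda>i. 1/2 * h i + (1 - 1/2) * p i) \<in> S"
          using convS hS p(1) half_ok unfolding convex_fun_set_def by blast
        then have mI: "Inf (Phi n ` S) \<le> Phi n (\<lambda>i. 1/2 * h i + (1 - 1/2) * p i)"
          using bdd[OF Ssub] by (intro cInf_lower) auto
        have "eps\<^sup>2 = 8 * \<delta>" by (simp add: \<delta>_def)
        then show "- ln (real n) + real (Suc k) * \<delta> \<le> Phi n h"
          using js mI p(2) IH by (simp add: algebra_simps)
      qed
    qed
    define t where "t = length Hs - 1"
    have t: "t < length Hs" "last Hs = Hs ! t" using L by (auto simp: t_def last_conv_nth)
    obtain h where h: "h \<in> last Hs" using lne by auto
    have "- ln (real n) + real t * \<delta> \<le> Phi n h" using pot[of t] t h by auto
    moreover have "Phi n h \<le> 0" using h t subS[of t] by (intro Phi_le0) auto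
    ultimately have "real t * eps\<^sup>2 \<le> 8 * ln (real n)" by (simp add: \<delta>_def)
    then have "real t \<le> 8 * ln (real n) / eps\<^sup>2" using eps by (simp add: field_simps)
    moreover have "0 \<le> ln (real n) / eps\<^sup>2" using n by simp
    moreover have "8 * ln (real n) / eps\<^sup>2 = 8 * (ln (real n) / eps\<^sup>2)" by simp
    moreover have "real t < 9 * (1 + a)" if "real t \<le> 8 * a" "0 \<le> a" for a :: real
      using that by (simp add: algebra_simps)
    ultimately have "real t < 9 * (1 + ln (real n) / eps\<^sup>2)" by metis
    moreover have "\<sigma> Hs \<in> last Hs" using sig[of Hs] lne t subS by auto
    ultimately show "\<sigma> Hs \<in> last Hs \<and> real (length Hs - 1) < 9 * (1 + ln (real n) / eps\<^sup>2)"
      by (simp add: t_def)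
  qed
qed

theorem theorem2:
  shows "\<exists>C>0. \<forall>n\<ge>1. \<forall>H eps. H \<subseteq> prob_simplex n \<and> convex_fun_set H \<and> eps > 0 \<longrightarrow>
           (\<exists>\<sigma>. wins_within n H eps \<sigma> (C * (1 + ln (real n) / eps\<^sup>2)))"
proof (intro exI[of _ 9] conjI allI impI)
  fix n :: nat and H and eps :: real
  assume "n \<ge> 1" "H \<subseteq> prob_simplex n \<and> convex_fun_set H \<and> eps > 0"
  then show "\<exists>\<sigma>. wins_within n H eps \<sigma> (9 * (1 + ln (real n) / eps\<^sup>2))"
    using main_lemma by blast
qed simp

end
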